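(* For integers $i\ge0$, $j\ge0$, $j_1\ge0$, $j_2\ge0$ and real $k_1,k_2,k$: (a) $b_{i,j_1+j_2,0}=\sum_{r=0}^{i}\binom{i}{r}b_{r,j_1,k}\,b_{i-r,j_2,-k}$; (b) $b_{i,j,0}=\sum_{r=0}^{i}\binom{i}{r}k^r\,b_{i-r,j,-k}$; (c) $b_{i,j,k}=\sum_{r=0}^{i}\binom{i}{r}k^{i-r}\,b_{r,j,0}$; (d) $b_{i,j,k_1+k_2}=\sum_{r=0}^{i}\binom{i}{r}k_1^{i-r}\,b_{r,j,k_2}$; (e) if $j\ge1$, then $j\cdot b_{i,j-1,k+1}=\sum_{r=0}^{i}\binom{i}{r}k^{i-r}\,b_{r+1,j,0}$.
   Context: For integers $i\ge0$, $j\ge0$ and real $k$, $b_{i,j,k}=\sum_{r=0}^{j}\binom{j}{r}(-1)^{j-r}(r+k)^i$, with the convention $0^0=1$ (also in the powers of $k$, $k_1$ appearing above). *)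

theory Defs
  imports Complex_Main
begin

text \<open>b i j k = sum over r from 0 to j of (j choose r) (-1)^(j-r) (r+k)^i.
  Powers use the natural-number exponent, so 0^0 = 1 as required.\<close>
definition b :: "nat \<Rightarrow> nat \<Rightarrow> real \<Rightarrow> real" where
  "b i j k = (\<Sum>r=0..j. real (j choose r) * (-1) ^ (j - r) * (real r + k) ^ i)"

end

theory Submission
  imports Defs
begin

lemma b_atMost: "b i j k = (\<Sum>r\<le>j. real (j choose r) * (-1) ^ (j - r) * (real r + k) ^ i)"
  unfolding b_def by (simp add: atMost_atLeast0)

lemma b_zero[simp]: "b i 0 k = k ^ i"
  unfolding b_def by simp

lemma term_id:
  assumes "r \<le> j"
  shows "real (Suc j choose Suc r) * (-1) ^ (j - r) * x
    = real (j choose r) * (-1) ^ (j - r) * x - real (j choose Suc r) * (-1) ^ (j - Suc r) * x"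
proof (cases "r = j")
  case True then show ?thesis by simp
next
  case False
  then have "j - r = Suc (j - Suc r)" using assms by simp
  then show ?thesis by (simp add: algebra_simps)
qed

lemma sign_aux:
  assumes "r \<le> j"
  shows "real (j choose Suc r) * (-1) ^ (j - r) = - (real (j choose Suc r) * (-1) ^ (j - Suc r))"
proof (cases "r = j")
  case True then show ?thesis by simp
next
  case False
  then have "j - r = Suc (j - Suc r)" using assms by simp
  then show ?thesis by simp
qed

lemma b_rec: "b i (Suc j) k = b i j (k + 1) - b i j k"
proof -
  define h where "h r = real (j choose r) * (-1) ^ (j - r) * (real r + k) ^ i" for r
  have "b i (Suc j) k = (-1) ^ Suc j * k ^ i +
     (\<Sum>r\<le>j. real (Suc j choose Suc r) * (-1) ^ (Suc j - Suc r) * (real (Suc r) + k) ^ i)"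
    unfolding b_atMost by (subst sum.atMost_Suc_shift) simp
  also have "\<dots> = (-1) ^ Suc j * k ^ i +
     (\<Sum>r\<le>j. real (j choose r) * (-1) ^ (j - r) * (real r + (k + 1)) ^ i - h (Suc r))"
  proof (intro arg_cong2[where f="(+)"] sum.cong refl)
    fix r assume "r \<in> {..j}"
    then have rj: "r \<le> j" by simp
    have eq: "real (Suc r) + k = real r + (k + 1)" by simp
    show "real (Suc j choose Suc r) * (-1) ^ (Suc j - Suc r) * (real (Suc r) + k) ^ i
      = real (j choose r) * (-1) ^ (j - r) * (real r + (k + 1)) ^ i - h (Suc r)"
      using term_id[OF rj, of "(real (Suc r) + k) ^ i"] unfolding h_def eq by simp
  qed
  also have "\<dots> = (-1) ^ Suc j * k ^ i + b i j (k + 1) - (\<Sum>r\<le>j. h (Suc r))"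
    by (simp add: sum_subtractf b_atMost)
  also have "(\<Sum>r\<le>j. h (Suc r)) = b i j k - h 0"
  proof -
    have "b i j k = (\<Sum>r\<le>Suc j. h r)" unfolding b_atMost h_def by simp
    also have "\<dots> = h 0 + (\<Sum>r\<le>j. h (Suc r))" by (rule sum.atMost_Suc_shift)
    finally show ?thesis by simp
  qed
  finally show ?thesis unfolding h_def by simp
qed

lemma binom_shift: "(\<Sum>r=0..i. real (i choose r) * k1 ^ (i - r) * (x::real) ^ r) = (x + k1) ^ i"
  by (simp add: binomial_ring[of x k1] atMost_atLeast0 mult_ac)

lemma part_d: "b i j (k1 + k2) = (\<Sum>r=0..i. real (i choose r) * k1 ^ (i - r) * b r j k2)"
proof -
  have "(\<Sum>r=0..i. real (i choose r) * k1 ^ (i - r) * b r j k2)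
     = (\<Sum>r=0..i. \<Sum>s=0..j. real (j choose s) * (-1) ^ (j - s) * (real (i choose r) * k1 ^ (i - r) * (real s + k2) ^ r))"
    unfolding b_def by (simp add: sum_distrib_left algebra_simps)
  also have "\<dots> = (\<Sum>s=0..j. real (j choose s) * (-1) ^ (j - s) * (\<Sum>r=0..i. real (i choose r) * k1 ^ (i - r) * (real s + k2) ^ r))"
    by (subst sum.swap) (simp add: sum_distrib_left)
  also have "\<dots> = b i j (k1 + k2)"
    unfolding b_def binom_shift by (simp add: algebra_simps)
  finally show ?thesis by simp
qed

lemma part_a_gen: "b i (j1 + j2) (k1 + k2) = (\<Sum>r=0..i. real (i choose r) * b r j1 k1 * b (i - r) j2 k2)"
proof (induction j2 arbitrary: k2 i)
  case 0
  have "b i j1 (k2 + k1) = (\<Sum>r=0..i. real (i choose r) * k2 ^ (i - r) * b r j1 k1)" by (rule part_d)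
  then show ?case by (simp add: algebra_simps)
next
  case (Suc j2)
  have "b i (j1 + Suc j2) (k1 + k2) = b i (j1 + j2) (k1 + (k2 + 1)) - b i (j1 + j2) (k1 + k2)"
    by (simp add: b_rec algebra_simps)
  also have "\<dots> = (\<Sum>r=0..i. real (i choose r) * b r j1 k1 * (b (i - r) j2 (k2 + 1) - b (i - r) j2 k2))"
    unfolding Suc.IH by (simp add: sum_subtractf algebra_simps)
  finally show ?case by (simp add: b_rec)
qed

lemma part_e:
  assumes "j \<ge> 1"
  shows "real j * b i (j - 1) (k + 1) = (\<Sum>r=0..i. real (i choose r) * k ^ (i - r) * b (r + 1) j 0)"
proof -
  obtain m where m: "j = Suc m" using assms by (cases j) auto
  have "(\<Sum>r=0..i. real (i choose r) * k ^ (i - r) * b (r + 1) j 0)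
     = (\<Sum>r=0..i. \<Sum>s=0..j. real (j choose s) * (-1) ^ (j - s) * real s * (real (i choose r) * k ^ (i - r) * (real s) ^ r))"
    unfolding b_def by (simp add: sum_distrib_left algebra_simps)
  also have "\<dots> = (\<Sum>s=0..j. real (j choose s) * (-1) ^ (j - s) * real s * (\<Sum>r=0..i. real (i choose r) * k ^ (i - r) * (real s) ^ r))"
    by (subst sum.swap) (simp add: sum_distrib_left)
  also have "\<dots> = (\<Sum>s\<le>Suc m. real (Suc m choose s) * (-1) ^ (Suc m - s) * real s * (real s + k) ^ i)"
    unfolding binom_shift m by (simp add: atMost_atLeast0)
  also have "\<dots> = (\<Sum>s\<le>m. real (Suc m choose Suc s) * (-1) ^ (m - s) * real (Suc s) * (real (Suc s) + k) ^ i)"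
    by (subst sum.atMost_Suc_shift) simp
  also have "\<dots> = (\<Sum>s\<le>m. real (Suc m) * (real (m choose s) * (-1) ^ (m - s) * (real s + (k + 1)) ^ i))"
  proof (intro sum.cong refl)
    fix s assume "s \<in> {..m}"
    have "real (Suc m choose Suc s) * real (Suc s) = real (Suc m) * real (m choose s)"
      using Suc_times_binomial_eq[of m s] by (metis of_nat_mult mult.commute)
    then show "real (Suc m choose Suc s) * (-1) ^ (m - s) * real (Suc s) * (real (Suc s) + k) ^ i
       = real (Suc m) * (real (m choose s) * (-1) ^ (m - s) * (real s + (k + 1)) ^ i)"
    proof -
      have "real (Suc m choose Suc s) * (-1) ^ (m - s) * real (Suc s) * (real (Suc s) + k) ^ i
          = (real (Suc m choose Suc s) * real (Suc s)) * ((-1) ^ (m - s) * (real (Suc s) + k) ^ i)"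
        by (simp only: mult_ac)
      also have "\<dots> = real (Suc m) * (real (m choose s) * ((-1) ^ (m - s) * (real s + (k + 1)) ^ i))"
        unfolding \<open>real (Suc m choose Suc s) * real (Suc s) = real (Suc m) * real (m choose s)\<close>
        by (simp add: add_ac)
      finally show ?thesis by (simp only: mult_ac)
    qed
  qed
  also have "\<dots> = real j * b i (j - 1) (k + 1)"
    unfolding m b_atMost by (simp add: sum_distrib_left)
  finally show ?thesis by simp
qed

theorem mainTheorem9:
  fixes i j j1 j2 :: nat and k1 k2 k :: real
  shows "b i (j1 + j2) 0 = (\<Sum>r=0..i. real (i choose r) * b r j1 k * b (i - r) j2 (- k))
    \<and> b i j 0 = (\<Sum>r=0..i. real (i choose r) * k ^ r * b (i - r) j (- k))
    \<and> b i j k = (\<Sum>r=0..i. real (i choose r) * k ^ (i - r) * b r j 0)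
    \<and> b i j (k1 + k2) = (\<Sum>r=0..i. real (i choose r) * k1 ^ (i - r) * b r j k2)
    \<and> (j \<ge> 1 \<longrightarrow> real j * b i (j - 1) (k + 1) = (\<Sum>r=0..i. real (i choose r) * k ^ (i - r) * b (r + 1) j 0))"
proof (intro conjI impI)
  show "b i (j1 + j2) 0 = (\<Sum>r=0..i. real (i choose r) * b r j1 k * b (i - r) j2 (- k))"
    using part_a_gen[of i j1 j2 k "-k"] by simp
  show "b i j 0 = (\<Sum>r=0..i. real (i choose r) * k ^ r * b (i - r) j (- k))"
  proof -
    have "b i j 0 = (\<Sum>r=0..i. real (i choose r) * k ^ (i - r) * b r j (-k))"
      using part_d[of i j k "-k"] by simp
    also have "\<dots> = (\<Sum>r=0..i. real (i choose (i - r)) * k ^ (i - (i - r)) * b (i - r) j (-k))"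
      using sum.atLeastAtMost_rev[of "\<lambda>r. real (i choose r) * k ^ (i - r) * b r j (-k)" 0 i] by simp
    also have "\<dots> = (\<Sum>r=0..i. real (i choose r) * k ^ r * b (i - r) j (- k))"
      by (intro sum.cong refl) (simp add: binomial_symmetric[symmetric])
    finally show ?thesis .
  qed
  show "b i j k = (\<Sum>r=0..i. real (i choose r) * k ^ (i - r) * b r j 0)"
    using part_d[of i j k 0] by simp
  show "b i j (k1 + k2) = (\<Sum>r=0..i. real (i choose r) * k1 ^ (i - r) * b r j k2)"
    by (rule part_d)
  show "1 \<le> j \<Longrightarrow> real j * b i (j - 1) (k + 1) = (\<Sum>r=0..i. real (i choose r) * k ^ (i - r) * b (r + 1) j 0)"
    by (rule part_e)
qed

end
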